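(* Let $R$ be an exchange ring and $\alpha=[a_1\ a_2\ \cdots\ a_n]$ a right unimodular row over $R$ (i.e. $a_1R+\cdots+a_nR=R$). Then $\alpha$ can be transformed by a finite sequence of elementary column operations to a row $[b_1\ b_2\ \cdots\ b_n]$ such that $R=b_1R\oplus\cdots\oplus b_nR$ and $b_i\in a_iRa_i$ for each $i$.
   Context: All rings are unital. A ring $R$ is an exchange ring if for every $a\in R$ there is an idempotent $e\in aR$ with $1-e\in(1-a)R$ (equivalently, $R_R$ has the finite exchange property). An elementary column operation on a row $[c_1\ \cdots\ c_n]$ replaces some entry $c_i$ by $c_i+c_jr$ for some $j\neq i$ and $r\in R$ (right multiplication of the $1\times n$ matrix by a transvection $I+re_{ji}$). *)

theory Defs
  imports Main
begin

definition exchange_ring :: "'a::ring_1 itself \<Rightarrow> bool" where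
  "exchange_ring _ \<longleftrightarrow>
     (\<forall>a::'a. \<exists>e. e * e = e \<and> (\<exists>r. e = a * r) \<and> (\<exists>s. 1 - e = (1 - a) * s))"

definition right_unimodular :: "'a::ring_1 list \<Rightarrow> bool" where
  "right_unimodular c \<longleftrightarrow>
     (\<forall>y::'a. \<exists>x::nat \<Rightarrow> 'a. (\<Sum>i<length c. c ! i * x i) = y)"

definition elem_col_op :: "'a::ring_1 list \<Rightarrow> 'a list \<Rightarrow> bool" where
  "elem_col_op c d \<longleftrightarrow>
     (\<exists>i j r. i < length c \<and> j < length c \<and> j \<noteq> i \<and> d = c[i := c ! i + c ! j * r])"

definition right_direct_sum_decomp :: "'a::ring_1 list \<Rightarrow> bool" where
  "right_direct_sum_decomp b \<longleftrightarrow>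
     (\<forall>y::'a. \<exists>x::nat \<Rightarrow> 'a. (\<Sum>i<length b. b ! i * x i) = y) \<and>
     (\<forall>z::nat \<Rightarrow> 'a. (\<forall>i<length b. \<exists>x. z i = b ! i * x) \<longrightarrow>
         (\<Sum>i<length b. z i) = 0 \<longrightarrow> (\<forall>i<length b. z i = 0))"

end

theory Submission
  imports Defs
begin

lemma sum_single:
  assumes "finite A" "i \<in> A" "\<And>j. j \<in> A \<Longrightarrow> j \<noteq> i \<Longrightarrow> f j = 0"
  shows "sum f A = f i"
proof -
  have "sum f A = f i + sum f (A - {i})" using assms(1,2) by (simp add: sum.remove)
  also have "sum f (A - {i}) = 0" using assms(3) by (intro sum.neutral) auto
  finally show ?thesis by simp
qed

lemma corner_exchange:
  fixes g u :: "'a::ring_1"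
  assumes ex: "exchange_ring TYPE('a)" and gg: "g*g = g" and gu: "g*u = u" and ug: "u*g = u"
  shows "\<exists>k. k*k = k \<and> g*k = k \<and> k*g = k \<and> (\<exists>r. k = u*r) \<and> (\<exists>s. g - k = (g - u)*s)"
proof -
  obtain e r s where ee: "e*e = e" and er: "e = (u + (1 - g))*r"
    and es: "1 - e = (1 - (u + (1 - g)))*s"
    using ex unfolding exchange_ring_def by blast
  have es': "1 - e = (g - u)*s" using es by simp
  define p where "p = 1 - e"
  have gp: "g*p = p"
  proof -
    have "g*(g-u) = g - u" using gg gu by (simp add: algebra_simps)
    then have "g*((g-u)*s) = (g-u)*s" by (metis mult.assoc)
    then show ?thesis using es' p_def by simp
  qed
  have e1: "e = 1 - p" using p_def by simp
  have c1: "(1-g)*e = 1 - g" using gp unfolding e1 by (simp add: algebra_simps)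
  have geg: "g*e*g = e*g"
  proof -
    have "e*g = (g + (1-g))*e*g" by simp
    also have "\<dots> = g*e*g + ((1-g)*e)*g" by (simp add: algebra_simps)
    also have "\<dots> = g*e*g + (1-g)*g" using c1 by simp
    also have "\<dots> = g*e*g" using gg by (simp add: algebra_simps)
    finally show ?thesis by simp
  qed
  have ge: "g*e = u*r"
  proof -
    have "g*e = (g*u + g - g*g)*r" unfolding er by (simp add: algebra_simps)
    then show ?thesis using gg gu by simp
  qed
  define k where "k = e*g"
  have "k*k = k" unfolding k_def
    by (metis ee geg mult.assoc)
  moreover have "g*k = k" unfolding k_def by (metis geg mult.assoc)
  moreover have "k*g = k" unfolding k_def by (metis gg mult.assoc)
  moreover have "k = u*(r*g)" unfolding k_def by (metis ge geg mult.assoc)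
  moreover have "g - k = (g - u)*(s*g)"
  proof -
    have "g - k = (1 - e)*g" unfolding k_def by (simp add: algebra_simps)
    then show ?thesis using es' by (simp add: mult.assoc)
  qed
  ultimately show ?thesis by blast
qed

lemma orth_idem:
  fixes c z :: "nat \<Rightarrow> 'a::ring_1"
  assumes ex: "exchange_ring TYPE('a)"
  shows "g*g = g \<Longrightarrow> (\<forall>i<n. g * c i = c i) \<Longrightarrow> (\<Sum>i<n. c i * z i) = g \<Longrightarrow>
    \<exists>h. (\<forall>i<n. h i * h i = h i) \<and> (\<forall>i<n. \<exists>w. h i = c i * w) \<and>
        (\<forall>i<n. \<forall>j<n. i \<noteq> j \<longrightarrow> h i * h j = 0) \<and> (\<Sum>i<n. h i) = g"
proof (induction n arbitrary: g c z)
  case 0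
  then show ?case by simp
next
  case (Suc n)
  note gg = Suc.prems(1) and gc = Suc.prems(2) and gs = Suc.prems(3)
  define u where "u = c n * z n * g"
  have gu: "g*u = u" unfolding u_def using gc by (simp add: mult.assoc[symmetric])
  have ug: "u*g = u" unfolding u_def using gg by (simp add: mult.assoc)
  have gmu: "g - u = (\<Sum>i<n. c i * z i) * g"
  proof -
    have "g = g*g" using gg by simp
    also have "\<dots> = ((\<Sum>i<n. c i * z i) + c n * z n) * g" using gs by simp
    also have "\<dots> = (\<Sum>i<n. c i * z i) * g + u" unfolding u_def
      by (simp add: algebra_simps)
    finally show ?thesis by (simp add: algebra_simps)
  qed
  obtain k r s where kk: "k*k = k" and gk: "g*k = k" and kg: "k*g = k" and kr: "k = u*r"
    and ks: "g - k = (g - u)*s"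
    using corner_exchange[OF ex gg gu ug] by blast
  define f where "f = g - k"
  have ff: "f*f = f" unfolding f_def using gg gk kg kk by (simp add: algebra_simps)
  have fk: "f*k = 0" unfolding f_def using gk kk by (simp add: algebra_simps)
  have gf: "g = f + k" unfolding f_def by simp
  have fsum: "f = (\<Sum>i<n. c i * (z i * g * s))"
    unfolding f_def ks gmu by (simp add: sum_distrib_right mult.assoc)
  define c' where "c' i = f * c i" for i
  define z' where "z' i = z i * g * s * f" for i
  have fc': "\<forall>i<n. f * c' i = c' i" unfolding c'_def using ff by (simp add: mult.assoc[symmetric])
  have sc': "(\<Sum>i<n. c' i * z' i) = f"
  proof -
    have "(\<Sum>i<n. c' i * z' i) = f * (\<Sum>i<n. c i * (z i * g * s)) * f"
      unfolding c'_def z'_def by (simp add: sum_distrib_left sum_distrib_right mult.assoc)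
    also have "\<dots> = f" using ff fsum[symmetric] by simp
    finally show ?thesis .
  qed
  obtain h where hh: "\<forall>i<n. h i * h i = h i" and hw: "\<forall>i<n. \<exists>w. h i = c' i * w"
    and ho: "\<forall>i<n. \<forall>j<n. i \<noteq> j \<longrightarrow> h i * h j = 0" and hs: "(\<Sum>i<n. h i) = f"
    using Suc.IH[OF ff fc' sc'] by blast
  obtain w where w: "\<forall>i<n. h i = c' i * w i" using hw by metis
  define t where "t i = c i * w i" for i
  have ft: "f * t i = h i" if "i<n" for i using w that unfolding t_def c'_def by (simp add: mult.assoc)
  have hf: "h i * f = h i" if "i < n" for i
  proof -
    have "h i * f = (\<Sum>j<n. h i * h j)" unfolding hs[symmetric] by (simp add: sum_distrib_left)
    also have "\<dots> = h i * h i" using that ho by (intro sum_single) auto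
    finally show ?thesis using hh that by simp
  qed
  have hk: "h i * k = 0" if "i < n" for i
    by (metis hf[OF that] fk mult.assoc mult_zero_right)
  have hg: "h i * g = h i" if "i < n" for i
    using hf[OF that] hk[OF that] gf by (simp add: algebra_simps)
  have htj: "h i * t j = h i * h j" if "i<n" "j<n" for i j
    by (metis hf[OF that(1)] ft[OF that(2)] mult.assoc)
  define S where "S = (\<Sum>i<n. t i * h i)"
  define H where "H i = (if i < n then t i * h i else g - S)" for i
  have HH: "H i * H j = (if i = j then H i else 0)" if "i<n" "j<n" for i j
  proof -
    have "H i * H j = t i * (h i * t j) * h j" using that unfolding H_def by (simp add: mult.assoc)
    also have "\<dots> = t i * (h i * h j * h j)" using htj[OF that] by (simp add: mult.assoc)
    finally show ?thesis using that hh ho unfolding H_def by auto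
  qed
  have gt: "g * t i = t i" if "i<n" for i using gc that unfolding t_def by (simp add: mult.assoc[symmetric])
  have gH: "g * H i = H i" if "i<n" for i using gt[OF that] that unfolding H_def by (simp add: mult.assoc[symmetric])
  have Hg: "H i * g = H i" if "i<n" for i using hg[OF that] that unfolding H_def by (simp add: mult.assoc)
  have SH: "S = (\<Sum>i<n. H i)" unfolding S_def H_def by simp
  have HS: "H i * S = H i" if "i<n" for i
  proof -
    have "H i * S = (\<Sum>j<n. H i * H j)" unfolding SH by (simp add: sum_distrib_left)
    also have "\<dots> = H i * H i" using that HH by (intro sum_single) auto
    finally show ?thesis using HH that by simp
  qed
  have SHi: "S * H i = H i" if "i<n" for i
  proof -
    have "S * H i = (\<Sum>j<n. H j * H i)" unfolding SH by (simp add: sum_distrib_right)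
    also have "\<dots> = H i * H i" using that HH by (intro sum_single) auto
    finally show ?thesis using HH that by simp
  qed
  have SS: "S * S = S"
  proof -
    have "S * S = (\<Sum>i<n. H i * S)" by (simp add: SH sum_distrib_right)
    also have "\<dots> = (\<Sum>i<n. H i)" using HS by simp
    finally show ?thesis using SH by simp
  qed
  have gS: "g * S = S" unfolding SH by (simp add: sum_distrib_left gH)
  have Sg: "S * g = S" unfolding SH by (simp add: sum_distrib_right Hg)
  have Hn: "H n = g - S" unfolding H_def by simp
  have Hnn: "H n * H n = H n" unfolding Hn using gg gS Sg SS by (simp add: algebra_simps)
  have HiHn: "H i * H n = 0" if "i<n" for i unfolding Hn using Hg[OF that] HS[OF that]
    by (simp add: algebra_simps)
  have HnHi: "H n * H i = 0" if "i<n" for i unfolding Hn using gH[OF that] SHi[OF that]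
    by (simp add: algebra_simps)
  have Hsplit: "t i * h i = k * (t i * h i) + h i" if "i<n" for i
  proof -
    have "t i * h i = (f + k) * t i * h i" using gt[OF that] gf by (metis mult.assoc)
    also have "\<dots> = k * (t i * h i) + h i * h i" using ft[OF that] by (simp add: algebra_simps)
    finally show ?thesis using hh that by simp
  qed
  have Sform: "S = k * S + f"
  proof -
    have "S = (\<Sum>i<n. k * (t i * h i) + h i)" unfolding S_def using Hsplit by simp
    also have "\<dots> = k * S + f" unfolding S_def hs[symmetric] by (simp add: sum.distrib sum_distrib_left)
    finally show ?thesis .
  qed
  have Hnc: "\<exists>w. H n = c n * w"
  proof -
    have "H n = k - k * S" unfolding Hn using Sform gf by (simp add: algebra_simps)
    also have "\<dots> = k * (1 - S)" by (simp add: algebra_simps)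
    also have "\<dots> = c n * (z n * g * r * (1 - S))" unfolding kr u_def by (simp add: mult.assoc)
    finally show ?thesis by blast
  qed
  have A1: "\<forall>i<Suc n. H i * H i = H i" using HH Hnn by (auto simp: less_Suc_eq)
  have A2: "\<forall>i<Suc n. \<exists>w. H i = c i * w"
  proof (intro allI impI)
    fix i assume "i < Suc n"
    then show "\<exists>w. H i = c i * w"
    proof (cases "i < n")
      case True then show ?thesis unfolding H_def t_def by (auto simp: mult.assoc)
    next
      case False then have "i = n" using \<open>i < Suc n\<close> by simp
      then show ?thesis using Hnc by simp
    qed
  qed
  have A3: "\<forall>i<Suc n. \<forall>j<Suc n. i \<noteq> j \<longrightarrow> H i * H j = 0"
    using HH HiHn HnHi by (auto simp: less_Suc_eq)
  have A4: "(\<Sum>i<Suc n. H i) = g" using SH Hn by simp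
  show ?case using A1 A2 A3 A4 by blast
qed


lemma add_comb:
  fixes c :: "'a::ring_1 list"
  assumes "finite J" "i < length c" "J \<subseteq> {..<length c} - {i}"
  shows "elem_col_op\<^sup>*\<^sup>* c (c[i := c!i + (\<Sum>j\<in>J. c!j * r j)])"
  using assms
proof (induction J rule: finite_induct)
  case empty
  then show ?case by simp
next
  case (insert j J)
  let ?d = "c[i := c!i + (\<Sum>j\<in>J. c!j * r j)]"
  have IH: "elem_col_op\<^sup>*\<^sup>* c ?d" using insert by auto
  have ji: "j \<noteq> i" "j < length c" "i < length c" using insert by auto
  have "elem_col_op ?d (?d[i := ?d!i + ?d!j * r j])"
    unfolding elem_col_op_def
    apply (rule exI[of _ i], rule exI[of _ j], rule exI[of _ "r j"])
    using ji insert.prems by simp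
  moreover have "?d[i := ?d!i + ?d!j * r j] = c[i := c!i + (\<Sum>j\<in>insert j J. c!j * r j)]"
    using ji insert.hyps by (simp add: algebra_simps)
  ultimately show ?case using IH by (metis rtranclp.rtrancl_into_rtrancl)
qed

theorem lemma2p4:
  fixes a :: "'a::ring_1 list"
  assumes "exchange_ring TYPE('a)"
    and "right_unimodular a"
  shows "\<exists>b. elem_col_op\<^sup>*\<^sup>* a b \<and> right_direct_sum_decomp b \<and>
             (\<forall>i<length a. \<exists>r. b ! i = a ! i * r * a ! i)"
proof -
  define n where "n = length a"
  obtain x where x: "(\<Sum>i<n. a ! i * x i) = 1"
    using assms(2) unfolding right_unimodular_def n_def by blast
  obtain e where ee: "\<forall>i<n. e i * e i = e i" and ew: "\<forall>i<n. \<exists>w. e i = a ! i * w"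
    and eo: "\<forall>i<n. \<forall>j<n. i \<noteq> j \<longrightarrow> e i * e j = 0" and es: "(\<Sum>i<n. e i) = 1"
    using orth_idem[OF assms(1), of 1 n "\<lambda>i. a ! i" x] x by auto
  obtain u where u: "\<forall>i<n. e i = a ! i * u i" using ew by metis
  define b where "b = map (\<lambda>i. e i * a ! i) [0..<n]"
  have lb: "length b = n" unfolding b_def by simp
  have bi: "b ! i = e i * a ! i" if "i < n" for i unfolding b_def using that by simp
  have bu: "b ! i * u i = e i" if "i < n" for i
    using bi[OF that] u ee that by (metis mult.assoc)
  define row where "row m = map (\<lambda>i. if i < m then e i * a ! i else a ! i) [0..<n]" for m
  have rowu: "row m ! j * u j = e j" if "j < n" for m j
    using that u ee unfolding row_def by (auto simp: mult.assoc)
  have step: "elem_col_op\<^sup>*\<^sup>* (row m) (row (Suc m))" if "m < n" for m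
  proof -
    let ?r = "\<lambda>j. - (u j * a ! m)"
    have lr: "length (row m) = n" unfolding row_def by simp
    have "elem_col_op\<^sup>*\<^sup>* (row m) ((row m)[m := row m ! m + (\<Sum>j\<in>{..<n} - {m}. row m ! j * ?r j)])"
      using that lr by (intro add_comb) auto
    moreover have "(row m)[m := row m ! m + (\<Sum>j\<in>{..<n} - {m}. row m ! j * ?r j)] = row (Suc m)"
    proof -
      have "(\<Sum>j\<in>{..<n} - {m}. row m ! j * ?r j) = - ((\<Sum>j\<in>{..<n} - {m}. e j) * a ! m)"
        using rowu by (simp add: sum_distrib_right sum_negf mult.assoc[symmetric])
      also have "(\<Sum>j\<in>{..<n} - {m}. e j) = 1 - e m"
        using es that by (simp add: sum_diff1)
      finally have sm: "row m ! m + (\<Sum>j\<in>{..<n} - {m}. row m ! j * ?r j) = e m * a ! m"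
        using that unfolding row_def by (simp add: algebra_simps)
      have rn: "row k ! i = (if i < k then e i * a ! i else a ! i)" if "i < n" for k i
        using that unfolding row_def by simp
      show ?thesis
      proof (rule nth_equalityI)
        show "length ((row m)[m := row m ! m + (\<Sum>j\<in>{..<n} - {m}. row m ! j * ?r j)]) = length (row (Suc m))"
          unfolding row_def by simp
      next
        fix i assume "i < length ((row m)[m := row m ! m + (\<Sum>j\<in>{..<n} - {m}. row m ! j * ?r j)])"
        then have i: "i < n" using lr by simp
        show "(row m)[m := row m ! m + (\<Sum>j\<in>{..<n} - {m}. row m ! j * ?r j)] ! i = row (Suc m) ! i"
          using i lr sm rn[OF i, of m] rn[OF i, of "Suc m"] by (cases "i = m") (auto simp: nth_list_update)
      qed
    qed
    ultimately show ?thesis by simp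
  qed
  have reach: "m \<le> n \<Longrightarrow> elem_col_op\<^sup>*\<^sup>* (row 0) (row m)" for m
  proof (induction m)
    case 0 then show ?case by simp
  next
    case (Suc m) then show ?case using step[of m] by (meson Suc_leD Suc_le_lessD rtranclp_trans)
  qed
  have r0: "row 0 = a" unfolding row_def n_def by (simp add: map_nth)
  have rn: "row n = b" unfolding row_def b_def by simp
  have ops: "elem_col_op\<^sup>*\<^sup>* a b" using reach[of n] r0 rn by simp
  have surj: "\<forall>y. \<exists>x. (\<Sum>i<length b. b ! i * x i) = y"
  proof
    fix y
    have "(\<Sum>i<n. b ! i * (u i * y)) = (\<Sum>i<n. e i) * y"
      using bu by (simp add: sum_distrib_right mult.assoc[symmetric])
    then show "\<exists>x. (\<Sum>i<length b. b ! i * x i) = y" using es lb by auto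
  qed
  have indep: "\<forall>z. (\<forall>i<length b. \<exists>x. z i = b ! i * x) \<longrightarrow>
         (\<Sum>i<length b. z i) = 0 \<longrightarrow> (\<forall>i<length b. z i = 0)"
  proof (intro allI impI)
    fix z :: "nat \<Rightarrow> 'a" and j
    assume zb: "\<forall>i<length b. \<exists>x. z i = b ! i * x" and z0: "(\<Sum>i<length b. z i) = 0"
      and j: "j < length b"
    have ez: "e j * z i = (if i = j then z i else 0)" if iN: "i < n" for i
    proof -
      obtain y where "z i = e i * a ! i * y" using zb bi iN lb by metis
      then show ?thesis using ee eo iN j lb by (auto simp: mult.assoc[symmetric])
    qed
    have "0 = e j * (\<Sum>i<n. z i)" using z0 lb by simp
    also have "\<dots> = (\<Sum>i<n. e j * z i)" by (simp add: sum_distrib_left)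
    also have "\<dots> = e j * z j" using j lb ez by (intro sum_single) auto
    also have "\<dots> = z j" using ez j lb by simp
    finally show "z j = 0" by simp
  qed
  have "\<forall>i<length a. \<exists>r. b ! i = a ! i * r * a ! i"
    using bi u n_def by auto
  then show ?thesis using ops surj indep unfolding right_direct_sum_decomp_def by blast
qed

end
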